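(* Let $k\in\mathbb{N}$ and let $M_\psi$ be a bounded multiplication operator on $\mathcal{L}^{(k)}$ or on $\mathcal{L}^{(k)}_0$. Then $M_\psi$ is bounded below if and only if $\inf_{v\in T}|\psi(v)|>0$.
   Context: $T$ is a tree (locally finite, connected, simply connected graph, identified with its vertex set) without terminal vertices, rooted at $o$. $|v|$ is the distance from $o$ to $v$; for $v\ne o$, $v^-$ is the parent of $v$. $T^*=T\setminus\{o\}$, $Df(v)=|f(v)-f(v^-)|$. For $x\ge1$: $\ell_0(x)=1$, $\ell_1(x)=1+\ln x$, $\ell_j(x)=1+\ln\ell_{j-1}(x)$ for $j\ge2$. $\mathcal{L}^{(k)}$ is the space of $f:T\to\mathbb{C}$ with $\sup_{v\in T^*}|v|\prod_{j=0}^{k-1}\ell_j(|v|)Df(v)<\infty$, normed by $\|f\|_k=|f(o)|+\sup_{v\in T^*}|v|\prod_{j=0}^{k-1}\ell_j(|v|)Df(v)$; $\mathcal{L}^{(k)}_0$ is its subspace of $f$ with $|v|\prod_{j=0}^{k-1}\ell_j(|v|)Df(v)\to0$ as $|v|\to\infty$. $M_\psi f=\psi f$. An operator $S$ on a Banach space $X$ is bounded below if there is $c>0$ with $\|Sx\|\ge c\|x\|$ for all $x\in X$. *)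

theory Defs
  imports "HOL-Analysis.Analysis"
begin

definition is_walk :: "'a set \<Rightarrow> ('a \<Rightarrow> 'a \<Rightarrow> bool) \<Rightarrow> 'a \<Rightarrow> 'a \<Rightarrow> 'a list \<Rightarrow> bool" where
  "is_walk V E u v p \<longleftrightarrow> p \<noteq> [] \<and> hd p = u \<and> last p = v \<and> set p \<subseteq> V \<and>
     (\<forall>i. Suc i < length p \<longrightarrow> E (p ! i) (p ! Suc i))"

definition is_path :: "'a set \<Rightarrow> ('a \<Rightarrow> 'a \<Rightarrow> bool) \<Rightarrow> 'a \<Rightarrow> 'a \<Rightarrow> 'a list \<Rightarrow> bool" where
  "is_path V E u v p \<longleftrightarrow> is_walk V E u v p \<and> distinct p"

definition is_tree :: "'a set \<Rightarrow> ('a \<Rightarrow> 'a \<Rightarrow> bool) \<Rightarrow> bool" where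
  "is_tree V E \<longleftrightarrow>
     (\<forall>u v. E u v \<longrightarrow> u \<in> V \<and> v \<in> V) \<and> (\<forall>u v. E u v \<longrightarrow> E v u) \<and> (\<forall>u. \<not> E u u) \<and>
     (\<forall>u\<in>V. \<forall>v\<in>V. \<exists>!p. is_path V E u v p)"

definition locally_finite :: "'a set \<Rightarrow> ('a \<Rightarrow> 'a \<Rightarrow> bool) \<Rightarrow> bool" where
  "locally_finite V E \<longleftrightarrow> (\<forall>v\<in>V. finite {w. E v w})"

definition no_terminal_vertices :: "'a set \<Rightarrow> ('a \<Rightarrow> 'a \<Rightarrow> bool) \<Rightarrow> bool" where
  "no_terminal_vertices V E \<longleftrightarrow> (\<forall>v\<in>V. card {w. E v w} \<noteq> 1)"

definition tdist :: "'a set \<Rightarrow> ('a \<Rightarrow> 'a \<Rightarrow> bool) \<Rightarrow> 'a \<Rightarrow> 'a \<Rightarrow> nat" where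
  "tdist V E r v = (LEAST n. \<exists>p. is_walk V E r v p \<and> length p = Suc n)"

definition tparent :: "'a set \<Rightarrow> ('a \<Rightarrow> 'a \<Rightarrow> bool) \<Rightarrow> 'a \<Rightarrow> 'a \<Rightarrow> 'a" where
  "tparent V E r v = (THE w. E v w \<and> Suc (tdist V E r w) = tdist V E r v)"

definition Dop :: "'a set \<Rightarrow> ('a \<Rightarrow> 'a \<Rightarrow> bool) \<Rightarrow> 'a \<Rightarrow> ('a \<Rightarrow> complex) \<Rightarrow> 'a \<Rightarrow> real" where
  "Dop V E r f v = cmod (f v - f (tparent V E r v))"

fun ell :: "nat \<Rightarrow> real \<Rightarrow> real" where
  "ell 0 x = 1"
| "ell (Suc 0) x = 1 + ln x"
| "ell (Suc (Suc j)) x = 1 + ln (ell (Suc j) x)"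

definition weight :: "nat \<Rightarrow> nat \<Rightarrow> real" where
  "weight k n = real n * (\<Prod>j<k. ell j (real n))"

definition wD :: "'a set \<Rightarrow> ('a \<Rightarrow> 'a \<Rightarrow> bool) \<Rightarrow> 'a \<Rightarrow> nat \<Rightarrow> ('a \<Rightarrow> complex) \<Rightarrow> 'a \<Rightarrow> real" where
  "wD V E r k f v = weight k (tdist V E r v) * Dop V E r f v"

definition Lk :: "'a set \<Rightarrow> ('a \<Rightarrow> 'a \<Rightarrow> bool) \<Rightarrow> 'a \<Rightarrow> nat \<Rightarrow> ('a \<Rightarrow> complex) set" where
  "Lk V E r k = {f. bdd_above (wD V E r k f ` (V - {r}))}"

definition Lk0 :: "'a set \<Rightarrow> ('a \<Rightarrow> 'a \<Rightarrow> bool) \<Rightarrow> 'a \<Rightarrow> nat \<Rightarrow> ('a \<Rightarrow> complex) set" where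
  "Lk0 V E r k = {f. f \<in> Lk V E r k \<and>
      (\<forall>\<epsilon>>0. \<exists>N. \<forall>v\<in>V - {r}. N \<le> tdist V E r v \<longrightarrow> wD V E r k f v < \<epsilon>)}"

text \<open>The norm; 0 is inserted into the supremum only so that it is well defined
  when T* is empty (the values wD are nonnegative, so otherwise nothing changes).\<close>
definition Lnorm :: "'a set \<Rightarrow> ('a \<Rightarrow> 'a \<Rightarrow> bool) \<Rightarrow> 'a \<Rightarrow> nat \<Rightarrow> ('a \<Rightarrow> complex) \<Rightarrow> real" where
  "Lnorm V E r k f = cmod (f r) + Sup (insert 0 (wD V E r k f ` (V - {r})))"

definition mult_op :: "('a \<Rightarrow> complex) \<Rightarrow> ('a \<Rightarrow> complex) \<Rightarrow> 'a \<Rightarrow> complex" where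
  "mult_op \<psi> f = (\<lambda>v. \<psi> v * f v)"

definition bounded_mult_on :: "('a \<Rightarrow> complex) set \<Rightarrow> (('a \<Rightarrow> complex) \<Rightarrow> real) \<Rightarrow> ('a \<Rightarrow> complex) \<Rightarrow> bool" where
  "bounded_mult_on X nrm \<psi> \<longleftrightarrow> (\<forall>f\<in>X. mult_op \<psi> f \<in> X) \<and>
     (\<exists>C. \<forall>f\<in>X. nrm (mult_op \<psi> f) \<le> C * nrm f)"

definition bounded_below_on :: "('a \<Rightarrow> complex) set \<Rightarrow> (('a \<Rightarrow> complex) \<Rightarrow> real) \<Rightarrow> (('a \<Rightarrow> complex) \<Rightarrow> ('a \<Rightarrow> complex)) \<Rightarrow> bool" where
  "bounded_below_on X nrm S \<longleftrightarrow> (\<exists>c>0. \<forall>f\<in>X. nrm (S f) \<ge> c * nrm f)"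

end

theory Submission
  imports Defs
begin

lemma walk_iff: "is_walk V E u v p \<longleftrightarrow> p \<noteq> [] \<and> hd p = u \<and> last p = v \<and> set p \<subseteq> V \<and> successively E p"
  by (simp add: is_walk_def successively_conv_nth)

lemma walk_shorten:
  assumes "is_walk V E u v p" "\<not> distinct p"
  shows "\<exists>q. is_walk V E u v q \<and> length q < length p"
proof -
  obtain xs ys zs y where p: "p = xs@[y]@ys@[y]@zs" using not_distinct_decomp[OF assms(2)] by blast
  have s: "successively E (xs@[y]@ys@[y]@zs)" using assms(1) p by (simp add: walk_iff)
  have s1: "successively E (xs@[y])" using s
    by (metis append_assoc successively_append_iff)
  have s2: "successively E ([y]@zs)" using s
    by (metis successively_append_iff)
  have "successively E (xs@[y]@zs)" using s1 s2
    by (auto simp: successively_append_iff)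
  moreover have "hd (xs@[y]@zs) = hd p" by (cases xs) (auto simp: p)
  moreover have "last (xs@[y]@zs) = last p" by (cases zs) (auto simp: p)
  moreover have "set (xs@[y]@zs) \<subseteq> set p" by (auto simp: p)
  ultimately have "is_walk V E u v (xs@[y]@zs)" using assms(1) by (auto simp: walk_iff)
  moreover have "length (xs@[y]@zs) < length p" by (simp add: p)
  ultimately show ?thesis by blast
qed

lemma tdist_walk:
  assumes "is_walk V E r v p"
  shows "\<exists>q. is_walk V E r v q \<and> length q = Suc (tdist V E r v)"
proof -
  have "\<exists>n. \<exists>p. is_walk V E r v p \<and> length p = Suc n"
    using assms by (intro exI[of _ "length p - 1"] exI[of _ p]) (auto simp: walk_iff)
  from LeastI_ex[OF this] show ?thesis unfolding tdist_def by blast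
qed

lemma tdist_le:
  assumes "is_walk V E r v p"
  shows "tdist V E r v < length p"
proof -
  have "length p = Suc (length p - 1)" using assms by (cases p) (auto simp: walk_iff)
  hence "tdist V E r v \<le> length p - 1" unfolding tdist_def
    using assms by (intro Least_le) blast
  thus ?thesis using assms by (cases p) (auto simp: walk_iff)
qed

lemma min_walk_distinct:
  assumes "is_walk V E r v p" "length p = Suc (tdist V E r v)"
  shows "distinct p"
  using walk_shorten[OF assms(1)] tdist_le assms(2) by (metis not_less_eq)

lemma tree_conn:
  assumes "is_tree V E" "u \<in> V" "v \<in> V"
  shows "\<exists>p. is_walk V E u v p"
  using assms unfolding is_tree_def is_path_def by blast

lemma tree_EV:
  assumes "is_tree V E" "E u v"
  shows "u \<in> V" "v \<in> V"
proof -
  have "\<forall>u v. E u v \<longrightarrow> u \<in> V \<and> v \<in> V" using conjunct1[OF assms(1)[unfolded is_tree_def]] .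
  thus "u \<in> V" "v \<in> V" using assms(2) by blast+
qed

lemma tree_sym:
  assumes "is_tree V E" "E u v"
  shows "E v u"
proof -
  have "\<forall>u v. E u v \<longrightarrow> E v u" using conjunct1[OF conjunct2[OF assms(1)[unfolded is_tree_def]]] .
  thus ?thesis using assms(2) by blast
qed

lemma tree_uniq:
  assumes "is_tree V E" "u \<in> V" "v \<in> V"
  shows "\<exists>!p. is_path V E u v p"
proof -
  have "\<forall>u\<in>V. \<forall>v\<in>V. \<exists>!p. is_path V E u v p"
    using conjunct2[OF conjunct2[OF conjunct2[OF assms(1)[unfolded is_tree_def]]]] .
  thus ?thesis using assms(2,3) by blast
qed

lemma tparent_ex:
  assumes tree: "is_tree V E" and r: "r \<in> V" and v: "v \<in> V" "v \<noteq> r"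
  shows "\<exists>w. E v w \<and> Suc (tdist V E r w) = tdist V E r v"
proof -
  define n where "n = tdist V E r v"
  obtain p0 where "is_walk V E r v p0" using tree_conn[OF tree r v(1)] by blast
  from tdist_walk[OF this] obtain p where p: "is_walk V E r v p" "length p = Suc n"
    unfolding n_def by blast
  have n0: "n \<noteq> 0"
  proof
    assume "n = 0"
    then obtain x where "p = [x]" using p(2) by (cases p) auto
    thus False using p(1) v(2) by (auto simp: walk_iff)
  qed
  define w where "w = p ! (n - 1)"
  have pne: "p \<noteq> []" and plast: "last p = v" using p by (auto simp: walk_iff)
  have lastp: "p ! n = v" using last_conv_nth[OF pne] plast p(2) by simp
  have allE: "\<forall>i. Suc i < length p \<longrightarrow> E (p ! i) (p ! Suc i)" using p(1) unfolding is_walk_def by blast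
  have "E (p ! (n - 1)) (p ! Suc (n - 1))" using allE[rule_format, of "n - 1"] p(2) n0 by simp
  hence Ewv: "E w v" using n0 lastp unfolding w_def by simp
  have Evw: "E v w" using tree_sym[OF tree Ewv] .
  have wt: "is_walk V E r w (take n p)"
    unfolding is_walk_def
  proof (intro conjI allI impI)
    show "take n p \<noteq> []" using n0 pne by simp
    show "hd (take n p) = r" using n0 p(1) by (simp add: is_walk_def)
    show "last (take n p) = w" unfolding w_def using n0 p(2)
      by (subst last_conv_nth) auto
    show "set (take n p) \<subseteq> V" using p(1) set_take_subset[of n p] unfolding is_walk_def by blast
    fix i assume "Suc i < length (take n p)"
    thus "E (take n p ! i) (take n p ! Suc i)" using p(1) unfolding is_walk_def by simp
  qed
  have "tdist V E r w < n" using tdist_le[OF wt] p n0 by simp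
  moreover have "n < Suc (Suc (tdist V E r w))"
  proof -
    obtain q where q: "is_walk V E r w q" "length q = Suc (tdist V E r w)"
      using tdist_walk[OF wt] by blast
    have "is_walk V E r v (q @ [v])" using q Ewv v
      by (auto simp: walk_iff successively_append_iff)
    from tdist_le[OF this] show ?thesis using q n_def by simp
  qed
  ultimately have "Suc (tdist V E r w) = n" by linarith
  thus ?thesis using Evw n_def by blast
qed

lemma tparent_uniq:
  assumes tree: "is_tree V E" and r: "r \<in> V" and v: "v \<in> V"
    and w1: "E v w1" "Suc (tdist V E r w1) = tdist V E r v"
    and w2: "E v w2" "Suc (tdist V E r w2) = tdist V E r v"
  shows "w1 = w2"
proof -
  have V: "w1 \<in> V" "w2 \<in> V" using tree_EV[OF tree] w1 w2 by blast+
  have E: "E w1 v" "E w2 v" using tree_sym[OF tree] w1 w2 by blast+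
  obtain q1 where q1: "is_walk V E r w1 q1" "length q1 = Suc (tdist V E r w1)"
    using tdist_walk[of V E r w1] tree_conn[OF tree r V(1)] by blast
  obtain q2 where q2: "is_walk V E r w2 q2" "length q2 = Suc (tdist V E r w2)"
    using tdist_walk[of V E r w2] tree_conn[OF tree r V(2)] by blast
  have p1: "is_walk V E r v (q1 @ [v])" using q1 E v
    by (auto simp: walk_iff successively_append_iff)
  have p2: "is_walk V E r v (q2 @ [v])" using q2 E v
    by (auto simp: walk_iff successively_append_iff)
  have l1: "length (q1 @ [v]) = Suc (tdist V E r v)" using q1(2) w1(2) by simp
  have l2: "length (q2 @ [v]) = Suc (tdist V E r v)" using q2(2) w2(2) by simp
  have d1: "distinct (q1 @ [v])" using min_walk_distinct[OF p1 l1] .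
  have d2: "distinct (q2 @ [v])" using min_walk_distinct[OF p2 l2] .
  have ex: "\<exists>!p. is_path V E r v p" using tree_uniq[OF tree r v] .
  have pp1: "is_path V E r v (q1 @ [v])" using p1 d1 unfolding is_path_def by blast
  have pp2: "is_path V E r v (q2 @ [v])" using p2 d2 unfolding is_path_def by blast
  obtain p0 where "is_path V E r v p0" "\<forall>y. is_path V E r v y \<longrightarrow> y = p0" by (rule ex1E[OF ex])
  hence "q1 @ [v] = p0" "q2 @ [v] = p0" using pp1 pp2 by blast+
  hence "q1 @ [v] = q2 @ [v]" by simp
  hence "q1 = q2" by simp
  have "last q1 = w1" "last q2 = w2" using q1(1) q2(1) by (simp_all add: walk_iff)
  thus ?thesis using \<open>q1 = q2\<close> by simp
qed

lemma tparent:
  assumes tree: "is_tree V E" and r: "r \<in> V" and v: "v \<in> V" "v \<noteq> r"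
  shows "E v (tparent V E r v) \<and> Suc (tdist V E r (tparent V E r v)) = tdist V E r v"
proof -
  obtain w where w: "E v w \<and> Suc (tdist V E r w) = tdist V E r v"
    using tparent_ex[OF assms] by blast
  have "\<exists>!w. E v w \<and> Suc (tdist V E r w) = tdist V E r v"
  proof (rule ex1I[of _ w])
    show "E v w \<and> Suc (tdist V E r w) = tdist V E r v" using w .
    fix y assume "E v y \<and> Suc (tdist V E r y) = tdist V E r v"
    thus "y = w" using tparent_uniq[OF tree r v(1), of y w] w by blast
  qed
  from theI'[OF this] show ?thesis unfolding tparent_def .
qed


lemma ell_ge1: "x \<ge> 1 \<Longrightarrow> ell j x \<ge> 1"
  by (induction j x rule: ell.induct) auto

lemma ell_Suc_le: "x \<ge> 1 \<Longrightarrow> ell j (x + 1) \<le> 2 * ell j x"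
proof (induction j x rule: ell.induct)
  case (1 x) thus ?case by simp
next
  case (2 x)
  have "ln (x + 1) \<le> ln (2 * x)" using 2 by simp
  also have "\<dots> = ln 2 + ln x" using 2 by (simp add: ln_mult)
  finally have "ln (x + 1) \<le> ln 2 + ln x" .
  moreover have "ln (2::real) \<le> 1" using ln_2_less_1 by simp
  moreover have "ln x \<ge> 0" using 2 by simp
  ultimately show ?case by simp
next
  case (3 j x)
  have a1: "ell (Suc j) x \<ge> 1" using ell_ge1 3(2) by blast
  have a2: "ell (Suc j) (x + 1) \<ge> 1" using ell_ge1 3(2) by simp
  have "ln (ell (Suc j) (x + 1)) \<le> ln (2 * ell (Suc j) x)" using 3 a1 a2 by simp
  also have "\<dots> = ln 2 + ln (ell (Suc j) x)" using a1 by (simp add: ln_mult)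
  finally have "ln (ell (Suc j) (x + 1)) \<le> ln 2 + ln (ell (Suc j) x)" .
  moreover have "ln (2::real) \<le> 1" using ln_2_less_1 by simp
  moreover have "ln (ell (Suc j) x) \<ge> 0" using a1 by simp
  ultimately show ?case by simp
qed

lemma weight_pos: "n \<ge> 1 \<Longrightarrow> weight k n > 0"
proof -
  assume n: "n \<ge> 1"
  have "0 < (\<Prod>j<k. ell j (real n))"
  proof (rule prod_pos)
    fix j assume "j \<in> {..<k}"
    show "0 < ell j (real n)" using ell_ge1[of "real n" j] n by simp
  qed
  thus ?thesis using n unfolding weight_def by simp
qed

lemma weight_nonneg: "weight k n \<ge> 0"
  using weight_pos[of n k] by (cases "n = 0") (auto simp: weight_def)

lemma weight_Suc: "n \<ge> 1 \<Longrightarrow> weight k (Suc n) \<le> 2 ^ Suc k * weight k n"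
proof -
  assume n: "n \<ge> 1"
  have "(\<Prod>j<k. ell j (real (Suc n))) \<le> (\<Prod>j<k. 2 * ell j (real n))"
  proof (rule prod_mono)
    fix j assume "j \<in> {..<k}"
    show "0 \<le> ell j (real (Suc n)) \<and> ell j (real (Suc n)) \<le> 2 * ell j (real n)"
      using ell_ge1[of "real (Suc n)" j] ell_Suc_le[of "real n" j] n by (simp add: add.commute)
  qed
  also have "\<dots> = 2 ^ k * (\<Prod>j<k. ell j (real n))" by (simp add: prod.distrib)
  finally have P: "(\<Prod>j<k. ell j (real (Suc n))) \<le> 2 ^ k * (\<Prod>j<k. ell j (real n))" .
  have P0: "0 \<le> (\<Prod>j<k. ell j (real (Suc n)))" 
  proof (rule prod_nonneg)
    fix j assume "j \<in> {..<k}"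
    show "0 \<le> ell j (real (Suc n))" using ell_ge1[of "real (Suc n)" j] by simp
  qed
  have "weight k (Suc n) = real (Suc n) * (\<Prod>j<k. ell j (real (Suc n)))" by (simp add: weight_def)
  also have "\<dots> \<le> (2 * real n) * (2 ^ k * (\<Prod>j<k. ell j (real n)))"
    using P P0 n by (intro mult_mono) auto
  also have "\<dots> = 2 ^ Suc k * weight k n" by (simp add: weight_def)
  finally show ?thesis .
qed


lemma le_R: "0 \<le> (x::real) \<Longrightarrow> x \<le> (1 + 2^n) * x"
proof -
  assume x: "0 \<le> x"
  have "(1 + 2^n) * x = x + 2^n * x" by (simp add: distrib_right)
  moreover have "0 \<le> (2::real)^n * x" using x by simp
  ultimately show ?thesis by linarith
qed

definition delta :: "'a \<Rightarrow> 'a \<Rightarrow> complex" where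
  "delta u = (\<lambda>w. if w = u then 1 else 0)"

locale trk =
  fixes V :: "'a set" and E :: "'a \<Rightarrow> 'a \<Rightarrow> bool" and r :: 'a and k :: nat
  assumes tree: "is_tree V E" and root: "r \<in> V"
begin

abbreviation "W \<equiv> wD V E r k"
abbreviation "dst \<equiv> tdist V E r"
abbreviation "par \<equiv> tparent V E r"
abbreviation "nrm \<equiv> Lnorm V E r k"
abbreviation "SS f \<equiv> Sup (insert 0 (W f ` (V - {r})))"

lemma par:
  assumes "v \<in> V" "v \<noteq> r"
  shows "par v \<in> V \<and> E v (par v) \<and> Suc (dst (par v)) = dst v"
proof -
  have a: "E v (par v) \<and> Suc (dst (par v)) = dst v" using tparent[OF tree root assms] .
  have "par v \<in> V" using tree_EV(2)[OF tree conjunct1[OF a]] .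
  thus ?thesis using a by (intro conjI) auto
qed

lemma par_eq: "v \<in> V \<Longrightarrow> v \<noteq> r \<Longrightarrow> Suc (dst (par v)) = dst v"
  using par by blast

lemma par_V: "v \<in> V \<Longrightarrow> v \<noteq> r \<Longrightarrow> par v \<in> V"
  using par by blast

lemma par_ne:
  assumes "v \<in> V" "v \<noteq> r" shows "par v \<noteq> v"
proof
  assume eq: "par v = v"
  have "Suc (dst (par v)) = dst v" using par_eq[OF assms] .
  thus False using eq by simp
qed

lemma dst_pos:
  assumes "v \<in> V" "v \<noteq> r" shows "dst v \<ge> 1"
proof -
  have "Suc (dst (par v)) = dst v" using par_eq[OF assms] .
  thus ?thesis by (simp add: Suc_le_eq[symmetric] del: Suc_le_eq) 
qed

lemma child:
  assumes "w \<in> V" "w \<noteq> r" "par w = v" shows "dst w = Suc (dst v)"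
  using par_eq[OF assms(1,2)] assms(3) by simp

lemma W_def': "W f v = weight k (dst v) * cmod (f v - f (par v))"
  by (simp add: wD_def Dop_def)

lemma W_nonneg: "0 \<le> W f v"
  by (simp add: W_def' weight_nonneg)

lemma W_le_SS: "f \<in> Lk V E r k \<Longrightarrow> v \<in> V \<Longrightarrow> v \<noteq> r \<Longrightarrow> W f v \<le> SS f"
  by (rule cSup_upper) (auto simp: Lk_def)

lemma SS_nonneg: "f \<in> Lk V E r k \<Longrightarrow> 0 \<le> SS f"
  by (rule cSup_upper) (auto simp: Lk_def)

lemma SS_le: "(\<And>v. v \<in> V \<Longrightarrow> v \<noteq> r \<Longrightarrow> W f v \<le> B) \<Longrightarrow> 0 \<le> B \<Longrightarrow> SS f \<le> B"
  by (rule cSup_least) auto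

lemma nrm_eq: "nrm f = cmod (f r) + SS f"
  by (simp add: Lnorm_def)

lemma W_le_nrm: "f \<in> Lk V E r k \<Longrightarrow> v \<in> V \<Longrightarrow> v \<noteq> r \<Longrightarrow> W f v \<le> nrm f"
  using W_le_SS[of f v] nrm_eq[of f] norm_ge_zero[of "f r"] by linarith

lemma root_le_nrm: "f \<in> Lk V E r k \<Longrightarrow> cmod (f r) \<le> nrm f"
  using SS_nonneg[of f] nrm_eq[of f] by simp

lemma SS_le_nrm: "f \<in> Lk V E r k \<Longrightarrow> SS f \<le> nrm f"
  using nrm_eq[of f] by simp

lemma scal:
  assumes "f \<in> Lk V E r k"
  shows "nrm (\<lambda>w. a * f w) \<le> cmod a * nrm f"
proof -
  have Wa: "W (\<lambda>w. a * f w) v = cmod a * W f v" for v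
    by (simp add: W_def' norm_mult right_diff_distrib[symmetric])
  have "SS (\<lambda>w. a * f w) \<le> cmod a * SS f"
    using Wa W_le_SS[OF assms] SS_nonneg[OF assms]
    by (intro SS_le) (auto intro: mult_left_mono)
  thus ?thesis by (simp add: nrm_eq norm_mult distrib_left)
qed

lemma delta_W:
  assumes w: "w \<in> V" "w \<noteq> r" and u: "u \<in> V"
  shows "W (delta u) w \<le> weight k (dst u) + weight k (Suc (dst u))"
    and "Suc (Suc (dst u)) \<le> dst w \<Longrightarrow> W (delta u) w = 0"
proof -
  have pn: "par w \<noteq> w" using par_ne w by blast
  have "W (delta u) w \<le> weight k (dst u) + weight k (Suc (dst u)) \<and>
        (Suc (Suc (dst u)) \<le> dst w \<longrightarrow> W (delta u) w = 0)"
  proof (cases "w = u")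
    case True
    thus ?thesis using pn weight_nonneg[of k "Suc (dst u)"] by (simp add: W_def' delta_def)
  next
    case False
    show ?thesis
    proof (cases "par w = u")
      case True
      hence "dst w = Suc (dst u)" using child w by blast
      thus ?thesis using True False weight_nonneg[of k "dst u"] by (simp add: W_def' delta_def)
    next
      case F2: False
      thus ?thesis using False weight_nonneg[of k] by (simp add: W_def' delta_def add_nonneg_nonneg)
    qed
  qed
  thus "W (delta u) w \<le> weight k (dst u) + weight k (Suc (dst u))"
    and "Suc (Suc (dst u)) \<le> dst w \<Longrightarrow> W (delta u) w = 0" by auto
qed

lemma delta_Lk:
  assumes u: "u \<in> V" shows "delta u \<in> Lk V E r k"
proof -
  have "bdd_above (W (delta u) ` (V - {r}))"
    by (rule bdd_aboveI2[of _ _ "weight k (dst u) + weight k (Suc (dst u))"]) (use delta_W(1) u in auto)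
  thus ?thesis unfolding Lk_def by simp
qed

lemma delta_Lk0:
  assumes u: "u \<in> V" shows "delta u \<in> Lk0 V E r k"
  unfolding Lk0_def mem_Collect_eq
proof (intro conjI allI impI)
  show "delta u \<in> Lk V E r k" using delta_Lk[OF u] .
  fix \<epsilon> :: real assume e: "\<epsilon> > 0"
  show "\<exists>N. \<forall>v\<in>V - {r}. N \<le> dst v \<longrightarrow> W (delta u) v < \<epsilon>"
    by (rule exI[of _ "Suc (Suc (dst u))"]) (use delta_W(2) u e in auto)
qed

lemma delta_pos: "u \<in> V \<Longrightarrow> nrm (delta u) > 0"
proof (cases "u = r")
  case True
  assume u: "u \<in> V"
  have "0 \<le> SS (delta u)" using SS_nonneg[OF delta_Lk[OF u]] .
  moreover have "cmod (delta u r) = 1" using True by (simp add: delta_def)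
  ultimately show ?thesis using nrm_eq[of "delta u"] by linarith
next
  case False
  assume u: "u \<in> V"
  have "W (delta u) u = weight k (dst u)" using par_ne[OF u False] by (simp add: W_def' delta_def)
  moreover have "weight k (dst u) > 0" using weight_pos dst_pos[OF u False] by blast
  ultimately have "0 < SS (delta u)" using W_le_SS[OF delta_Lk[OF u] u False] by simp
  thus ?thesis using nrm_eq[of "delta u"] norm_ge_zero[of "delta u r"] by linarith
qed


lemma nrm_nonneg: "f \<in> Lk V E r k \<Longrightarrow> 0 \<le> nrm f"
  using SS_nonneg[of f] nrm_eq[of f] norm_ge_zero[of "f r"] by linarith

lemma modify_W:
  assumes g: "g \<in> Lk V E r k" and v: "v \<in> V" "v \<noteq> r" and w: "w \<in> V" "w \<noteq> r"
  shows "W (g(v := g (par v))) w \<le> (1 + 2^Suc k) * SS g"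
    and "Suc (Suc (dst v)) \<le> dst w \<Longrightarrow> W (g(v := g (par v))) w = W g w"
proof -
  define h where "h = g(v := g (par v))"
  have S0: "0 \<le> SS g" using SS_nonneg[OF g] .
  have pv: "par v \<noteq> v" using par_ne[OF v] .
  have "W h w \<le> (1 + 2^Suc k) * SS g \<and> (Suc (Suc (dst v)) \<le> dst w \<longrightarrow> W h w = W g w)"
  proof (cases "w = v")
    case True
    have "W h w = 0" using True pv by (simp add: W_def' h_def)
    thus ?thesis using S0 True by simp
  next
    case False
    show ?thesis
    proof (cases "par w = v")
      case True
      have dw: "dst w = Suc (dst v)" using child[OF w True] .
      have hw: "h w = g w" "h (par w) = g (par v)" using False True by (simp_all add: h_def)
      have "cmod (g w - g (par v)) \<le> cmod (g w - g v) + cmod (g v - g (par v))"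
        using norm_triangle_ineq[of "g w - g v" "g v - g (par v)"] by simp
      hence s1: "W h w \<le> weight k (Suc (dst v)) * cmod (g w - g v) + weight k (Suc (dst v)) * cmod (g v - g (par v))"
        using weight_nonneg[of k "Suc (dst v)"] hw dw
        by (simp add: W_def' distrib_left[symmetric] mult_left_mono)
      have s2: "weight k (Suc (dst v)) * cmod (g w - g v) = W g w"
        using True dw by (simp add: W_def')
      have s3: "weight k (Suc (dst v)) * cmod (g v - g (par v)) \<le> 2^Suc k * weight k (dst v) * cmod (g v - g (par v))"
        using weight_Suc[OF dst_pos[OF v], of k] by (simp add: mult_right_mono)
      have s4: "2^Suc k * weight k (dst v) * cmod (g v - g (par v)) = 2^Suc k * W g v" by (simp add: W_def')
      have "W h w \<le> W g w + 2^Suc k * W g v" using s1 s2 s3 s4 by linarith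
      moreover have "W g w \<le> SS g" using W_le_SS[OF g w] .
      moreover have "W g v \<le> SS g" using W_le_SS[OF g v] .
      ultimately have "W h w \<le> (1 + 2^Suc k) * SS g"
        by (smt (verit, ccfv_SIG) distrib_right mult_cancel_right1 mult_left_mono zero_le_power)
      thus ?thesis using dw by simp
    next
      case F2: False
      have "W h w = W g w" using False F2 by (simp add: W_def' h_def)
      moreover have "W g w \<le> SS g" using W_le_SS[OF g w] .
      moreover have "SS g \<le> (1 + 2^Suc k) * SS g" using le_R[OF S0] .
      ultimately show ?thesis by simp
    qed
  qed
  thus "W (g(v := g (par v))) w \<le> (1 + 2^Suc k) * SS g"
    and "Suc (Suc (dst v)) \<le> dst w \<Longrightarrow> W (g(v := g (par v))) w = W g w"
    unfolding h_def by auto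
qed

lemma modify_Lk:
  assumes g: "g \<in> Lk V E r k" and v: "v \<in> V" "v \<noteq> r"
  shows "g(v := g (par v)) \<in> Lk V E r k"
proof -
  have "bdd_above (W (g(v := g (par v))) ` (V - {r}))"
    by (rule bdd_aboveI2[of _ _ "(1 + 2^Suc k) * SS g"]) (use modify_W(1)[OF g v] in auto)
  thus ?thesis unfolding Lk_def by simp
qed

lemma modify_Lk0:
  assumes g: "g \<in> Lk0 V E r k" and v: "v \<in> V" "v \<noteq> r"
  shows "g(v := g (par v)) \<in> Lk0 V E r k"
  unfolding Lk0_def mem_Collect_eq
proof (intro conjI allI impI)
  have gL: "g \<in> Lk V E r k" using g unfolding Lk0_def by blast
  show "g(v := g (par v)) \<in> Lk V E r k" using modify_Lk[OF gL v] .
  fix \<epsilon> :: real assume e: "\<epsilon> > 0"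
  obtain N where N: "\<forall>w\<in>V - {r}. N \<le> dst w \<longrightarrow> W g w < \<epsilon>" using g e unfolding Lk0_def by blast
  show "\<exists>N. \<forall>w\<in>V - {r}. N \<le> dst w \<longrightarrow> W (g(v := g (par v))) w < \<epsilon>"
  proof (rule exI[of _ "max N (Suc (Suc (dst v)))"], intro ballI impI)
    fix w assume w: "w \<in> V - {r}" and d: "max N (Suc (Suc (dst v))) \<le> dst w"
    have "W (g(v := g (par v))) w = W g w" using modify_W(2)[OF gL v] w d by auto
    thus "W (g(v := g (par v))) w < \<epsilon>" using N w d by auto
  qed
qed

lemma modify_nrm:
  assumes g: "g \<in> Lk V E r k" and v: "v \<in> V" "v \<noteq> r"
  shows "nrm (g(v := g (par v))) \<le> (1 + 2^Suc k) * nrm g"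
proof -
  have "SS (g(v := g (par v))) \<le> (1 + 2^Suc k) * SS g"
    using modify_W(1)[OF g v] SS_nonneg[OF g] by (intro SS_le) auto
  moreover have "cmod (g r) \<le> (1 + 2^Suc k) * cmod (g r)"
  proof -
    have "(1 + 2^Suc k) * cmod (g r) = cmod (g r) + 2^Suc k * cmod (g r)" by (simp add: distrib_right)
    moreover have "0 \<le> (2::real)^Suc k * cmod (g r)" by simp
    ultimately show ?thesis by linarith
  qed
  ultimately show ?thesis using v(2) by (simp add: nrm_eq distrib_left)
qed

lemma below:
  assumes XL: "X \<subseteq> Lk V E r k"
    and cl: "\<And>f. f \<in> X \<Longrightarrow> mult_op \<psi> f \<in> X"
    and modX: "\<And>g v. g \<in> X \<Longrightarrow> v \<in> V \<Longrightarrow> v \<noteq> r \<Longrightarrow> g(v := g (par v)) \<in> X"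
    and C0: "0 \<le> C" and C: "\<And>f. f \<in> X \<Longrightarrow> nrm (mult_op \<psi> f) \<le> C * nrm f"
    and c0: "0 < c" and c: "\<And>v. v \<in> V \<Longrightarrow> c \<le> cmod (\<psi> v)"
    and f: "f \<in> X"
  shows "nrm f \<le> (2 / c + C * (1 + 2^Suc k) / c^2) * nrm (mult_op \<psi> f)"
proof -
  define g where "g = mult_op \<psi> f"
  define R :: real where "R = 1 + 2^Suc k"
  have gX: "g \<in> X" using cl[OF f] g_def by simp
  have gL: "g \<in> Lk V E r k" using gX XL by blast
  have ng: "0 \<le> nrm g" using nrm_nonneg[OF gL] .
  have ne: "\<psi> v \<noteq> 0" if "v \<in> V" for v using c[OF that] c0 by auto
  have fv: "f v = g v / \<psi> v" if "v \<in> V" for v using ne[OF that] by (simp add: g_def mult_op_def)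
  have key: "W f v \<le> nrm g / c + C * R * nrm g / c^2" if v: "v \<in> V" "v \<noteq> r" for v
  proof -
    define p where "p = par v"
    have pV: "p \<in> V" using par_V[OF v] p_def by simp
    have pv: "p \<noteq> v" using par_ne[OF v] p_def by simp
    define h where "h = g(v := g p)"
    have hX: "h \<in> X" using modX[OF gX v] h_def p_def by simp
    have hL: "h \<in> Lk V E r k" using hX XL by blast
    have hn: "nrm h \<le> R * nrm g" using modify_nrm[OF gL v] h_def p_def R_def by simp
    have phL: "mult_op \<psi> h \<in> Lk V E r k" using cl[OF hX] XL by blast
    have Wpsi: "W (mult_op \<psi> h) v = weight k (dst v) * (cmod (g p) * cmod (\<psi> v - \<psi> p))"
    proof -
      have "mult_op \<psi> h v - mult_op \<psi> h (par v) = g p * (\<psi> v - \<psi> p)"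
        using pv by (simp add: mult_op_def h_def p_def[symmetric] algebra_simps)
      thus ?thesis by (simp add: W_def' norm_mult)
    qed
    have b1: "W (mult_op \<psi> h) v \<le> C * R * nrm g"
    proof -
      have "W (mult_op \<psi> h) v \<le> nrm (mult_op \<psi> h)" using W_le_nrm[OF phL v] .
      also have "\<dots> \<le> C * nrm h" using C[OF hX] .
      also have "\<dots> \<le> C * (R * nrm g)" using hn C0 by (rule mult_left_mono)
      finally show ?thesis by simp
    qed
    have cv: "c \<le> cmod (\<psi> v)" and cp: "c \<le> cmod (\<psi> p)" using c v pV by auto
    have id: "f v - f p = (g v - g p) / \<psi> v + g p * (\<psi> p - \<psi> v) / (\<psi> v * \<psi> p)"
      using ne[OF v(1)] ne[OF pV] fv[OF v(1)] fv[OF pV] by (simp add: field_simps)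
    have i1: "cmod ((g v - g p) / \<psi> v) \<le> cmod (g v - g p) / c"
      unfolding norm_divide
      by (rule divide_left_mono[OF cv]) (use cv c0 in \<open>auto intro!: mult_pos_pos\<close>)
    have cc: "c^2 \<le> cmod (\<psi> v) * cmod (\<psi> p)"
      using mult_mono[OF cv cp] c0 by (simp add: power2_eq_square)
    have i2: "cmod (g p * (\<psi> p - \<psi> v) / (\<psi> v * \<psi> p)) \<le> cmod (g p) * cmod (\<psi> v - \<psi> p) / c^2"
    proof -
      have "cmod (g p * (\<psi> p - \<psi> v) / (\<psi> v * \<psi> p)) = cmod (g p) * cmod (\<psi> v - \<psi> p) / (cmod (\<psi> v) * cmod (\<psi> p))"
        by (simp add: norm_divide norm_mult norm_minus_commute)
      also have "\<dots> \<le> cmod (g p) * cmod (\<psi> v - \<psi> p) / c^2"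
      proof (rule divide_left_mono[OF cc])
        show "0 \<le> cmod (g p) * cmod (\<psi> v - \<psi> p)" by simp
        have "0 < c^2" using c0 by simp
        hence "0 < cmod (\<psi> v) * cmod (\<psi> p)" using cc by linarith
        thus "0 < cmod (\<psi> v) * cmod (\<psi> p) * c^2" using \<open>0 < c^2\<close> by simp
      qed
      finally show ?thesis .
    qed
    have i3: "cmod (f v - f p) \<le> cmod (g v - g p) / c + cmod (g p) * cmod (\<psi> v - \<psi> p) / c^2"
      using id norm_triangle_ineq[of "(g v - g p) / \<psi> v" "g p * (\<psi> p - \<psi> v) / (\<psi> v * \<psi> p)"] i1 i2
      by simp
    have wn: "0 \<le> weight k (dst v)" using weight_nonneg .
    have "W f v = weight k (dst v) * cmod (f v - f p)" by (simp add: W_def' p_def)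
    also have "\<dots> \<le> weight k (dst v) * (cmod (g v - g p) / c + cmod (g p) * cmod (\<psi> v - \<psi> p) / c^2)"
      using i3 wn by (rule mult_left_mono)
    also have "\<dots> = W g v / c + W (mult_op \<psi> h) v / c^2"
    proof -
      have e1: "W g v = weight k (dst v) * cmod (g v - g p)" by (simp add: W_def' p_def)
      show ?thesis using Wpsi e1 by (simp add: distrib_left)
    qed
    also have "\<dots> \<le> nrm g / c + C * R * nrm g / c^2"
    proof (rule add_mono)
      show "W g v / c \<le> nrm g / c" using W_le_nrm[OF gL v] c0 by (simp add: divide_right_mono)
      show "W (mult_op \<psi> h) v / c\<^sup>2 \<le> C * R * nrm g / c\<^sup>2" using b1 by (simp add: divide_right_mono)
    qed
    finally show ?thesis .
  qed
  have B0: "0 \<le> nrm g / c + C * R * nrm g / c^2" using ng C0 c0 R_def by simp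
  have SSf: "SS f \<le> nrm g / c + C * R * nrm g / c^2" using key B0 by (intro SS_le) auto
  have fr: "cmod (f r) \<le> nrm g / c"
  proof -
    have "cmod (f r) = cmod (g r) / cmod (\<psi> r)" using fv[OF root] by (simp add: norm_divide)
    also have "\<dots> \<le> cmod (g r) / c"
      by (rule divide_left_mono[OF c[OF root]]) (use c[OF root] c0 in \<open>auto intro!: mult_pos_pos\<close>)
    also have "\<dots> \<le> nrm g / c" using root_le_nrm[OF gL] c0 by (simp add: divide_right_mono)
    finally show ?thesis .
  qed
  have "nrm f \<le> 2 * (nrm g / c) + C * R * nrm g / c^2" using nrm_eq[of f] SSf fr by linarith
  also have "\<dots> = (2 / c + C * R / c^2) * nrm g" by (simp add: algebra_simps)
  finally show ?thesis unfolding g_def R_def .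
qed
end

theorem theorem4p4:
  fixes V :: "'a set" and E :: "'a \<Rightarrow> 'a \<Rightarrow> bool" and r :: 'a
    and k :: nat and \<psi> :: "'a \<Rightarrow> complex" and X :: "('a \<Rightarrow> complex) set"
  assumes tree: "is_tree V E" and lf: "locally_finite V E"
    and nt: "no_terminal_vertices V E" and root: "r \<in> V"
    and X: "X = Lk V E r k \<or> X = Lk0 V E r k"
    and bdd: "bounded_mult_on X (Lnorm V E r k) \<psi>"
  shows "bounded_below_on X (Lnorm V E r k) (mult_op \<psi>) \<longleftrightarrow> (INF v\<in>V. cmod (\<psi> v)) > 0"
proof -
  interpret trk V E r k using tree root by unfold_locales
  have XL: "X \<subseteq> Lk V E r k" using X unfolding Lk0_def by auto
  have deltaX: "delta u \<in> X" if "u \<in> V" for u using X delta_Lk[OF that] delta_Lk0[OF that] by auto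
  have modX: "g(v := g (par v)) \<in> X" if "g \<in> X" "v \<in> V" "v \<noteq> r" for g v
    using X that modify_Lk[of g v] modify_Lk0[of g v] by auto
  have cl: "mult_op \<psi> f \<in> X" if "f \<in> X" for f using bdd that unfolding bounded_mult_on_def by blast
  obtain C where C: "\<And>f. f \<in> X \<Longrightarrow> nrm (mult_op \<psi> f) \<le> C * nrm f"
    using bdd unfolding bounded_mult_on_def by blast
  have Vne: "V \<noteq> {}" using root by blast
  show ?thesis
  proof
    assume "bounded_below_on X nrm (mult_op \<psi>)"
    then obtain c where c0: "c > 0" and cb: "\<And>f. f \<in> X \<Longrightarrow> nrm (mult_op \<psi> f) \<ge> c * nrm f"
      unfolding bounded_below_on_def by blast
    have "c \<le> cmod (\<psi> u)" if u: "u \<in> V" for u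
    proof -
      have eq: "mult_op \<psi> (delta u) = (\<lambda>w. \<psi> u * delta u w)"
        by (rule ext) (simp add: mult_op_def delta_def)
      have "c * nrm (delta u) \<le> nrm (mult_op \<psi> (delta u))" using cb[OF deltaX[OF u]] .
      also have "\<dots> \<le> cmod (\<psi> u) * nrm (delta u)" unfolding eq using scal[OF delta_Lk[OF u]] .
      finally show ?thesis using delta_pos[OF u] by simp
    qed
    hence "c \<le> (INF v\<in>V. cmod (\<psi> v))" using Vne by (intro cINF_greatest) auto
    thus "(INF v\<in>V. cmod (\<psi> v)) > 0" using c0 by linarith
  next
    assume pos: "(INF v\<in>V. cmod (\<psi> v)) > 0"
    define c where "c = (INF v\<in>V. cmod (\<psi> v))"
    have bb: "bdd_below ((\<lambda>v. cmod (\<psi> v)) ` V)" by (rule bdd_belowI2[where m=0]) simp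
    have c: "c \<le> cmod (\<psi> v)" if "v \<in> V" for v unfolding c_def using cINF_lower[OF bb that] by simp
    define C' where "C' = max C 0"
    have C0: "0 \<le> C'" unfolding C'_def by simp
    have C': "nrm (mult_op \<psi> f) \<le> C' * nrm f" if "f \<in> X" for f
    proof -
      have "0 \<le> nrm f" using nrm_nonneg that XL by blast
      hence "C * nrm f \<le> C' * nrm f" unfolding C'_def by (intro mult_right_mono) auto
      thus ?thesis using C[OF that] by linarith
    qed
    have c0: "0 < c" using pos c_def by simp
    define K where "K = 2 / c + C' * (1 + 2^Suc k) / c^2"
    have K0: "0 < K" unfolding K_def using c0 C0 by (intro add_pos_nonneg) auto
    have "nrm f \<le> K * nrm (mult_op \<psi> f)" if "f \<in> X" for f
      unfolding K_def using below[OF XL cl modX C0 C' c0 c that] by blast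
    hence "\<forall>f\<in>X. nrm (mult_op \<psi> f) \<ge> (1 / K) * nrm f" using K0 by (auto simp: field_simps)
    thus "bounded_below_on X nrm (mult_op \<psi>)" unfolding bounded_below_on_def using K0
      by (intro exI[of _ "1 / K"]) auto
  qed
qed

end
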